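(* Let $\rho\in\mathbb R$ and let $\kappa_{\mathbf a}:\mathbb H_\rho\times\mathbb H_\rho\to\mathbb C$ be a positive semi-definite Dirichlet series kernel with associated reproducing kernel Hilbert space $\mathscr H_{\mathbf a}$. Then $\mathscr H_{\mathbf a,\infty}:=\{f\in\mathscr H_{\mathbf a}:\lim_{s\to\infty}f(s)=0\}$ is a closed subspace of $\mathscr H_{\mathbf a}$. If $\lim_{t\to\infty}\lim_{r\to\infty}\kappa_{\mathbf a}(t,r)\ne0$, then the reproducing kernel $\kappa_{\mathbf a,\infty}$ of $\mathscr H_{\mathbf a,\infty}$ is $$\kappa_{\mathbf a,\infty}(s,u)=\kappa_{\mathbf a}(s,u)-\frac{\lim_{r\to\infty}\kappa_{\mathbf a}(s,r)\,\lim_{t\to\infty}\kappa_{\mathbf a}(t,u)}{\lim_{t\to\infty}\lim_{r\to\infty}\kappa_{\mathbf a}(t,r)},\quad s,u\in\mathbb H_\rho.$$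
   Context: $\mathbb H_\rho=\{\Re s>\rho\}$. Limits $s,t,r\to\infty$ are taken along the positive real axis. $\kappa_{\mathbf a}(s,u)=\sum_{m,n\ge1}a_{m,n}m^{-s}n^{-\bar u}$ is a Dirichlet series kernel on $\mathbb H_\rho$ if $(s,u)\mapsto\kappa_{\mathbf a}(s,\bar u)$ is regularly convergent on $\mathbb H_\rho\times\mathbb H_\rho$ (the double series converges at each point and every row and column series converges there). $\mathscr H_{\mathbf a}$ is the Hilbert space of functions on $\mathbb H_\rho$ with $\kappa_{\mathbf a}(\cdot,t)\in\mathscr H_{\mathbf a}$ and $\langle f,\kappa_{\mathbf a}(\cdot,t)\rangle=f(t)$. *)

theory Defs
  imports "HOL-Analysis.Analysis"
begin

definition halfplane :: "real \<Rightarrow> complex set" where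
  "halfplane \<rho> = {s. Re s > \<rho>}"

definition dpsum :: "(nat \<Rightarrow> nat \<Rightarrow> complex) \<Rightarrow> complex \<Rightarrow> complex \<Rightarrow> nat \<times> nat \<Rightarrow> complex" where
  "dpsum a s u = (\<lambda>(M, N). \<Sum>m=1..M. \<Sum>n=1..N. a m n * of_nat m powr (-s) * of_nat n powr (-u))"

definition regularly_convergent_on :: "(nat \<Rightarrow> nat \<Rightarrow> complex) \<Rightarrow> complex set \<Rightarrow> bool" where
  "regularly_convergent_on a D \<longleftrightarrow>
     (\<forall>s\<in>D. \<forall>u\<in>D.
        (\<exists>L. (dpsum a s u \<longlongrightarrow> L) (sequentially \<times>\<^sub>F sequentially)) \<and>
        (\<forall>m\<ge>1. summable (\<lambda>n. a m (Suc n) * of_nat m powr (-s) * of_nat (Suc n) powr (-u))) \<and>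
        (\<forall>n\<ge>1. summable (\<lambda>m. a (Suc m) n * of_nat (Suc m) powr (-s) * of_nat n powr (-u))))"

definition dir_kernel :: "(nat \<Rightarrow> nat \<Rightarrow> complex) \<Rightarrow> complex \<Rightarrow> complex \<Rightarrow> complex" where
  "dir_kernel a s u = Lim (sequentially \<times>\<^sub>F sequentially) (dpsum a s (cnj u))"

definition dirichlet_kernel_on :: "real \<Rightarrow> (nat \<Rightarrow> nat \<Rightarrow> complex) \<Rightarrow> bool" where
  "dirichlet_kernel_on \<rho> a \<longleftrightarrow> regularly_convergent_on a (halfplane \<rho>)"

definition psd_kernel :: "complex set \<Rightarrow> (complex \<Rightarrow> complex \<Rightarrow> complex) \<Rightarrow> bool" where
  "psd_kernel D K \<longleftrightarrow>
     (\<forall>(n::nat) (x::nat \<Rightarrow> complex) (c::nat \<Rightarrow> complex). (\<forall>i<n. x i \<in> D) \<longrightarrow>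
        Im (\<Sum>i<n. \<Sum>j<n. c i * cnj (c j) * K (x i) (x j)) = 0 \<and>
        Re (\<Sum>i<n. \<Sum>j<n. c i * cnj (c j) * K (x i) (x j)) \<ge> 0)"

definition kfun :: "complex set \<Rightarrow> (complex \<Rightarrow> complex \<Rightarrow> complex) \<Rightarrow> complex \<Rightarrow> complex \<Rightarrow> complex" where
  "kfun D K t = (\<lambda>s. if s \<in> D then K s t else 0)"

definition hnorm :: "((complex \<Rightarrow> complex) \<Rightarrow> (complex \<Rightarrow> complex) \<Rightarrow> complex) \<Rightarrow> (complex \<Rightarrow> complex) \<Rightarrow> real" where
  "hnorm ip f = sqrt (Re (ip f f))"

definition rkhs :: "complex set \<Rightarrow> (complex \<Rightarrow> complex \<Rightarrow> complex) \<Rightarrow> (complex \<Rightarrow> complex) set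
      \<Rightarrow> ((complex \<Rightarrow> complex) \<Rightarrow> (complex \<Rightarrow> complex) \<Rightarrow> complex) \<Rightarrow> bool" where
  "rkhs D K H ip \<longleftrightarrow>
     (\<forall>f\<in>H. \<forall>x. x \<notin> D \<longrightarrow> f x = 0) \<and>
     (\<lambda>x. 0) \<in> H \<and>
     (\<forall>f\<in>H. \<forall>g\<in>H. (\<lambda>x. f x + g x) \<in> H) \<and>
     (\<forall>c. \<forall>f\<in>H. (\<lambda>x. c * f x) \<in> H) \<and>
     (\<forall>f\<in>H. \<forall>g\<in>H. \<forall>h\<in>H. ip (\<lambda>x. f x + g x) h = ip f h + ip g h) \<and>
     (\<forall>c. \<forall>f\<in>H. \<forall>g\<in>H. ip (\<lambda>x. c * f x) g = c * ip f g) \<and>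
     (\<forall>f\<in>H. \<forall>g\<in>H. ip g f = cnj (ip f g)) \<and>
     (\<forall>f\<in>H. Im (ip f f) = 0 \<and> Re (ip f f) \<ge> 0) \<and>
     (\<forall>f\<in>H. ip f f = 0 \<longrightarrow> f = (\<lambda>x. 0)) \<and>
     (\<forall>X. (\<forall>n. X n \<in> H) \<and>
          (\<forall>e>0. \<exists>N. \<forall>m\<ge>N. \<forall>n\<ge>N. hnorm ip (\<lambda>x. X m x - X n x) < e) \<longrightarrow>
          (\<exists>f\<in>H. (\<lambda>n. hnorm ip (\<lambda>x. X n x - f x)) \<longlonglongrightarrow> 0)) \<and>
     (\<forall>t\<in>D. kfun D K t \<in> H \<and> (\<forall>f\<in>H. ip f (kfun D K t) = f t))"

definition closed_subspace :: "(complex \<Rightarrow> complex) set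
      \<Rightarrow> ((complex \<Rightarrow> complex) \<Rightarrow> (complex \<Rightarrow> complex) \<Rightarrow> complex) \<Rightarrow> (complex \<Rightarrow> complex) set \<Rightarrow> bool" where
  "closed_subspace H ip M \<longleftrightarrow>
     M \<subseteq> H \<and> (\<lambda>x. 0) \<in> M \<and>
     (\<forall>f\<in>M. \<forall>g\<in>M. (\<lambda>x. f x + g x) \<in> M) \<and>
     (\<forall>c. \<forall>f\<in>M. (\<lambda>x. c * f x) \<in> M) \<and>
     (\<forall>X f. (\<forall>n. X n \<in> M) \<longrightarrow> f \<in> H \<longrightarrow>
        (\<lambda>n. hnorm ip (\<lambda>x. X n x - f x)) \<longlonglongrightarrow> 0 \<longrightarrow> f \<in> M)"

definition is_reproducing_kernel :: "complex set \<Rightarrow> (complex \<Rightarrow> complex) set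
      \<Rightarrow> ((complex \<Rightarrow> complex) \<Rightarrow> (complex \<Rightarrow> complex) \<Rightarrow> complex) \<Rightarrow> (complex \<Rightarrow> complex \<Rightarrow> complex) \<Rightarrow> bool" where
  "is_reproducing_kernel D M ip k \<longleftrightarrow>
     (\<forall>u\<in>D. kfun D k u \<in> M \<and> (\<forall>f\<in>M. ip f (kfun D k u) = f u))"

definition H_inf :: "(complex \<Rightarrow> complex) set \<Rightarrow> (complex \<Rightarrow> complex) set" where
  "H_inf H = {f \<in> H. ((\<lambda>x::real. f (of_real x)) \<longlongrightarrow> 0) at_top}"

definition lim_right :: "(complex \<Rightarrow> complex \<Rightarrow> complex) \<Rightarrow> complex \<Rightarrow> complex" where
  "lim_right K s = Lim at_top (\<lambda>r::real. K s (of_real r))"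

definition lim_left :: "(complex \<Rightarrow> complex \<Rightarrow> complex) \<Rightarrow> complex \<Rightarrow> complex" where
  "lim_left K u = Lim at_top (\<lambda>t::real. K (of_real t) u)"

definition lim_both :: "(complex \<Rightarrow> complex \<Rightarrow> complex) \<Rightarrow> complex" where
  "lim_both K = Lim at_top (\<lambda>t::real. lim_right K (of_real t))"

end

theory Submission
  imports Defs "HOL-Real_Asymp.Real_Asymp"
begin


lemma alg1: fixes A G F :: complex
  shows "G \<noteq> 0 \<Longrightarrow> cnj G = G \<Longrightarrow> F + cnj (-A/G) * A + (-A/G) * (cnj A + cnj(-A/G) * G) = F - cnj A * A / G"
  by (simp add: field_simps)

locale rk =
  fixes D :: "complex set" and K :: "complex \<Rightarrow> complex \<Rightarrow> complex"
    and H :: "(complex \<Rightarrow> complex) set"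
    and ip :: "(complex \<Rightarrow> complex) \<Rightarrow> (complex \<Rightarrow> complex) \<Rightarrow> complex"
  assumes R: "rkhs D K H ip"
begin

lemma vanish: "f \<in> H \<Longrightarrow> x \<notin> D \<Longrightarrow> f x = 0" using R unfolding rkhs_def by blast
lemma zero_in: "(\<lambda>x. 0) \<in> H" using R unfolding rkhs_def by blast
lemma add_in: "f \<in> H \<Longrightarrow> g \<in> H \<Longrightarrow> (\<lambda>x. f x + g x) \<in> H" using R unfolding rkhs_def by blast
lemma scale_in: "f \<in> H \<Longrightarrow> (\<lambda>x. c * f x) \<in> H" using R unfolding rkhs_def by blast
lemma ip_add: "f \<in> H \<Longrightarrow> g \<in> H \<Longrightarrow> h \<in> H \<Longrightarrow> ip (\<lambda>x. f x + g x) h = ip f h + ip g h"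
  using R unfolding rkhs_def by blast
lemma ip_scale: "f \<in> H \<Longrightarrow> g \<in> H \<Longrightarrow> ip (\<lambda>x. c * f x) g = c * ip f g"
  using R unfolding rkhs_def by blast
lemma ip_cnj: "f \<in> H \<Longrightarrow> g \<in> H \<Longrightarrow> ip g f = cnj (ip f g)"
  using R unfolding rkhs_def by blast
lemma ip_pos: "f \<in> H \<Longrightarrow> Im (ip f f) = 0 \<and> Re (ip f f) \<ge> 0"
  using R unfolding rkhs_def by blast
lemma ip_def0: "f \<in> H \<Longrightarrow> ip f f = 0 \<Longrightarrow> f = (\<lambda>x. 0)"
  using R unfolding rkhs_def by blast
lemma complete: "(\<forall>n. X n \<in> H) \<Longrightarrow>
          (\<forall>e>0. \<exists>N. \<forall>m\<ge>N. \<forall>n\<ge>N. hnorm ip (\<lambda>x. X m x - X n x) < e) \<Longrightarrow>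
          (\<exists>f\<in>H. (\<lambda>n. hnorm ip (\<lambda>x. X n x - f x)) \<longlonglongrightarrow> 0)"
  using R unfolding rkhs_def by blast
lemma kin: "t \<in> D \<Longrightarrow> kfun D K t \<in> H" using R unfolding rkhs_def by blast
lemma repr: "t \<in> D \<Longrightarrow> f \<in> H \<Longrightarrow> ip f (kfun D K t) = f t" using R unfolding rkhs_def by blast

lemma diff_in: "f \<in> H \<Longrightarrow> g \<in> H \<Longrightarrow> (\<lambda>x. f x - g x) \<in> H"
proof -
  assume a: "f \<in> H" "g \<in> H"
  have "(\<lambda>x. f x + (-1) * g x) \<in> H" using a add_in scale_in by blast
  thus ?thesis by simp
qed

lemma lin_in: "f \<in> H \<Longrightarrow> g \<in> H \<Longrightarrow> (\<lambda>x. f x + c * g x) \<in> H"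
  using add_in scale_in by blast

lemma ip_lin: "f \<in> H \<Longrightarrow> g \<in> H \<Longrightarrow> h \<in> H \<Longrightarrow> ip (\<lambda>x. f x + c * g x) h = ip f h + c * ip g h"
  using ip_add[of f "\<lambda>x. c * g x" h] ip_scale scale_in by simp

lemma ip_diff: "f \<in> H \<Longrightarrow> g \<in> H \<Longrightarrow> h \<in> H \<Longrightarrow> ip (\<lambda>x. f x - g x) h = ip f h - ip g h"
  using ip_lin[of f g h "-1"] by simp

lemma ip_lin2: "f \<in> H \<Longrightarrow> g \<in> H \<Longrightarrow> h \<in> H \<Longrightarrow> ip h (\<lambda>x. f x + c * g x) = ip h f + cnj c * ip h g"
proof -
  assume a: "f \<in> H" "g \<in> H" "h \<in> H"
  have "ip h (\<lambda>x. f x + c * g x) = cnj (ip (\<lambda>x. f x + c * g x) h)"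
    using ip_cnj[OF lin_in[OF a(1) a(2)] a(3)] by simp
  also have "\<dots> = cnj (ip f h) + cnj c * cnj (ip g h)" using a ip_lin by simp
  also have "\<dots> = ip h f + cnj c * ip h g" using ip_cnj[OF a(1) a(3)] ip_cnj[OF a(2) a(3)] by simp
  finally show ?thesis .
qed

lemma ip_diff2: "f \<in> H \<Longrightarrow> g \<in> H \<Longrightarrow> h \<in> H \<Longrightarrow> ip h (\<lambda>x. f x - g x) = ip h f - ip h g"
  using ip_lin2[of f g h "-1"] by simp

lemma ip_real: "f \<in> H \<Longrightarrow> ip f f = of_real (Re (ip f f))"
  using ip_pos by (simp add: complex_eq_iff)

lemma hn_sq: "f \<in> H \<Longrightarrow> (hnorm ip f)^2 = Re (ip f f)"
  unfolding hnorm_def using ip_pos by simp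

lemma hn_nonneg: "f \<in> H \<Longrightarrow> hnorm ip f \<ge> 0" unfolding hnorm_def using ip_pos by simp

lemma ip_zero1: "g \<in> H \<Longrightarrow> ip (\<lambda>x. 0) g = 0"
  using ip_scale[of g g 0] by simp

lemma cs: assumes f: "f \<in> H" and g: "g \<in> H" shows "cmod (ip f g) \<le> hnorm ip f * hnorm ip g"
proof (cases "ip g g = 0")
  case True
  then have "g = (\<lambda>x. 0)" using ip_def0 g by blast
  then have "ip f g = 0" using ip_cnj[OF f zero_in] ip_zero1[OF f] by simp
  then show ?thesis using hn_nonneg f g by (simp add: mult_nonneg_nonneg)
next
  case False
  define c where "c = - ip f g / ip g g"
  have h: "(\<lambda>x. f x + c * g x) \<in> H" using lin_in f g by blast
  have "ip (\<lambda>x. f x + c * g x) (\<lambda>x. f x + c * g x)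
      = ip f f + cnj c * ip f g + c * (ip g f + cnj c * ip g g)"
    using ip_lin[OF f g h, of c] ip_lin2[OF f g f, of c] ip_lin2[OF f g g, of c] by simp
  also have "\<dots> = ip f f - cnj (ip f g) * ip f g / ip g g"
  proof -
    have "cnj (ip g g) = ip g g" using ip_real[OF g] by (metis complex_cnj_complex_of_real)
    then show ?thesis using alg1[OF False, of "ip f f" "ip f g"] ip_cnj[OF f g] unfolding c_def by simp
  qed
  finally have e: "ip (\<lambda>x. f x + c * g x) (\<lambda>x. f x + c * g x) = ip f f - cnj (ip f g) * ip f g / ip g g" .
  have gp: "Re (ip g g) > 0" using ip_pos[OF g] False by (simp add: complex_eq_iff)
  have "Re (ip (\<lambda>x. f x + c * g x) (\<lambda>x. f x + c * g x)) \<ge> 0" using ip_pos[OF h] by blast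
  then have "Re (ip f f - cnj (ip f g) * ip f g / ip g g) \<ge> 0" by (simp only: e)
  moreover have "cnj (ip f g) * ip f g / ip g g = of_real ((cmod (ip f g))^2 / Re (ip g g))"
  proof -
    have "cnj (ip f g) * ip f g = of_real ((cmod (ip f g))^2)"
      using complex_norm_square[of "ip f g"] by (simp add: mult.commute)
    then show ?thesis by (subst ip_real[OF g]) simp
  qed
  ultimately have "(cmod (ip f g))^2 / Re (ip g g) \<le> Re (ip f f)" by simp
  then have "(cmod (ip f g))^2 \<le> Re (ip f f) * Re (ip g g)" using gp by (simp add: field_simps)
  also have "\<dots> = (hnorm ip f * hnorm ip g)^2" using hn_sq f g by (simp add: power_mult_distrib)
  finally show ?thesis by (rule power2_le_imp_le) (use hn_nonneg f g in simp)
qed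

lemma tri: assumes f: "f \<in> H" and g: "g \<in> H"
  shows "hnorm ip (\<lambda>x. f x + g x) \<le> hnorm ip f + hnorm ip g"
proof -
  have h: "(\<lambda>x. f x + g x) \<in> H" using add_in f g by blast
  have e: "ip (\<lambda>x. f x + g x) (\<lambda>x. f x + g x) = ip f f + ip f g + (ip g f + ip g g)"
    using ip_lin[OF f g h, of 1] ip_lin2[OF f g f, of 1] ip_lin2[OF f g g, of 1] by simp
  have "Re (ip f g) \<le> hnorm ip f * hnorm ip g" using cs[OF f g] complex_Re_le_cmod order_trans by blast
  moreover have "Re (ip g f) \<le> hnorm ip f * hnorm ip g"
  proof -
    have "cmod (ip g f) \<le> hnorm ip f * hnorm ip g" using cs[OF g f] by (simp only: mult.commute)
    then show ?thesis using complex_Re_le_cmod[of "ip g f"] by linarith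
  qed
  ultimately have "(hnorm ip (\<lambda>x. f x + g x))^2 \<le> (hnorm ip f + hnorm ip g)^2"
    using hn_sq[OF h] hn_sq[OF f] hn_sq[OF g] e by (simp add: power2_sum)
  thus ?thesis by (rule power2_le_imp_le) (use hn_nonneg f g in simp)
qed

lemma tri2: assumes f: "f \<in> H" and g: "g \<in> H" and k: "k \<in> H"
  shows "hnorm ip (\<lambda>x. f x - g x) \<le> hnorm ip (\<lambda>x. f x - k x) + hnorm ip (\<lambda>x. k x - g x)"
  using tri[OF diff_in[OF f k] diff_in[OF k g]] by simp

lemma hn_sym: assumes f: "f \<in> H" and g: "g \<in> H"
  shows "hnorm ip (\<lambda>x. f x - g x) = hnorm ip (\<lambda>x. g x - f x)"
proof -
  have "ip (\<lambda>x. f x - g x) (\<lambda>x. f x - g x) = ip (\<lambda>x. g x - f x) (\<lambda>x. g x - f x)"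
  proof -
    have u: "(\<lambda>x. f x - g x) \<in> H" and v: "(\<lambda>x. g x - f x) \<in> H" using diff_in f g by auto
    have "ip (\<lambda>x. f x - g x) (\<lambda>x. f x - g x) = (ip f f - ip f g) - (ip g f - ip g g)"
      using ip_diff[OF f g u] ip_diff2[OF f g f] ip_diff2[OF f g g] by simp
    moreover have "ip (\<lambda>x. g x - f x) (\<lambda>x. g x - f x) = (ip g g - ip g f) - (ip f g - ip f f)"
      using ip_diff[OF g f v] ip_diff2[OF g f f] ip_diff2[OF g f g] by simp
    ultimately show ?thesis by simp
  qed
  thus ?thesis unfolding hnorm_def by simp
qed

lemma ip_cont2: assumes f: "f \<in> H" and g: "g \<in> H" and h: "h \<in> H"
  shows "cmod (ip f g - ip f h) \<le> hnorm ip f * hnorm ip (\<lambda>x. g x - h x)"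
  using cs[OF f diff_in[OF g h]] ip_diff2[OF g h f] by simp

lemma ip_cont1: assumes f: "f \<in> H" and g: "g \<in> H" and h: "h \<in> H"
  shows "cmod (ip g f - ip h f) \<le> hnorm ip (\<lambda>x. g x - h x) * hnorm ip f"
  using cs[OF diff_in[OF g h] f] ip_diff[OF g h f] by simp

lemma kk: "s \<in> D \<Longrightarrow> t \<in> D \<Longrightarrow> ip (kfun D K t) (kfun D K s) = K s t"
  using repr kin unfolding kfun_def by simp

lemma kdiff_sq: assumes s: "s \<in> D" and t: "t \<in> D"
  shows "(hnorm ip (\<lambda>x. kfun D K s x - kfun D K t x))^2 = Re (K s s - K t s - K s t + K t t)"
proof -
  have "ip (\<lambda>x. kfun D K s x - kfun D K t x) (\<lambda>x. kfun D K s x - kfun D K t x) = K s s - K t s - K s t + K t t"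
  proof -
    have a: "kfun D K s \<in> H" "kfun D K t \<in> H" using kin s t by auto
    have u: "(\<lambda>x. kfun D K s x - kfun D K t x) \<in> H" using diff_in a by auto
    show ?thesis
      using ip_diff[OF a u] ip_diff2[OF a(1) a(2) a(1)] ip_diff2[OF a(1) a(2) a(2)] kk s t by simp
  qed
  thus ?thesis using hn_sq diff_in kin s t by metis
qed

end


lemma fin_bound:
  fixes f :: "nat \<Rightarrow> nat \<Rightarrow> complex"
  assumes "finite A" "\<forall>m\<in>A. \<exists>C. \<forall>n. cmod (f m n) \<le> C"
  shows "\<exists>C\<ge>0. \<forall>m\<in>A. \<forall>n. cmod (f m n) \<le> C"
  using assms
proof (induction A rule: finite_induct)
  case empty then show ?case by auto
next
  case (insert x F)
  then obtain C1 where C1: "C1 \<ge> 0" "\<forall>m\<in>F. \<forall>n. cmod (f m n) \<le> C1" by auto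
  obtain C2 where C2: "\<forall>n. cmod (f x n) \<le> C2" using insert by auto
  show ?case
    by (rule exI[of _ "max C1 C2"]) (use C1 C2 in \<open>force intro: max.coboundedI1 max.coboundedI2 order_trans\<close>)
qed

lemma dpsum_Suc:
  "dpsum a s u (Suc p, Suc q) - dpsum a s u (p, Suc q) - dpsum a s u (Suc p, q) + dpsum a s u (p, q)
   = a (Suc p) (Suc q) * of_nat (Suc p) powr (-s) * of_nat (Suc q) powr (-u)"
  unfolding dpsum_def by (simp add: sum.cl_ivl_Suc sum.distrib algebra_simps)

lemma norm4: "cmod (A - B - C + Dd) \<le> cmod A + cmod B + cmod C + cmod Dd"
  using norm_triangle_ineq[of "A - B - C" Dd] norm_triangle_ineq4[of "A - B" C] norm_triangle_ineq4[of A B]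
  by linarith

lemma norm4L: "cmod (A - B - C + Dd) \<le> cmod (A - L) + cmod (B - L) + cmod (C - L) + cmod (Dd - L)"
proof -
  have "A - B - C + Dd = (A - L) - (B - L) - (C - L) + (Dd - L)" by simp
  then show ?thesis using norm4[of "A - L" "B - L" "C - L" "Dd - L"] by (simp only:)
qed

lemma term_bound:
  assumes "regularly_convergent_on a D" "s \<in> D" "u \<in> D"
  shows "\<exists>C\<ge>0. \<forall>m\<ge>1. \<forall>n\<ge>1. cmod (a m n * of_nat m powr (-s) * of_nat n powr (-u)) \<le> C"
proof -
  define b where "b m n = a m n * of_nat m powr (-s) * of_nat n powr (-u)" for m n
  from assms have conv: "\<exists>L. (dpsum a s u \<longlongrightarrow> L) (sequentially \<times>\<^sub>F sequentially)"
    and rows: "\<forall>m\<ge>1. summable (\<lambda>n. b m (Suc n))"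
    and cols: "\<forall>n\<ge>1. summable (\<lambda>m. b (Suc m) n)"
    unfolding regularly_convergent_on_def b_def by auto
  obtain L where L: "(dpsum a s u \<longlongrightarrow> L) (sequentially \<times>\<^sub>F sequentially)" using conv by auto
  have "eventually (\<lambda>p. dist (dpsum a s u p) L < 1/2) (sequentially \<times>\<^sub>F sequentially)"
    using L tendsto_iff[THEN iffD1, OF L, rule_format, of "1/2"] by simp
  then obtain N where N: "\<forall>m\<ge>N. \<forall>n\<ge>N. dist (dpsum a s u (n, m)) L < 1/2"
    unfolding eventually_prod_sequentially by auto
  have big: "cmod (b m n) \<le> 2" if "m \<ge> Suc N" "n \<ge> Suc N" for m n
  proof -
    define p where "p = m - 1"
    define q where "q = n - 1"
    have p: "m = Suc p" using that unfolding p_def by simp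
    have q: "n = Suc q" using that unfolding q_def by simp
    have pq: "p \<ge> N" "q \<ge> N" using that unfolding p_def q_def by simp_all
    let ?T = "dpsum a s u"
    have e: "b m n = ?T (Suc p, Suc q) - ?T (p, Suc q) - ?T (Suc p, q) + ?T (p, q)"
      unfolding p q b_def by (rule dpsum_Suc[symmetric])
    have "cmod (b m n) \<le> cmod (?T (Suc p, Suc q) - L) + cmod (?T (p, Suc q) - L) + cmod (?T (Suc p, q) - L) + cmod (?T (p, q) - L)"
      unfolding e by (rule norm4L)
    also have "\<dots> \<le> 2"
      using N[rule_format, of "Suc q" "Suc p"] N[rule_format, of "Suc q" p] N[rule_format, of q "Suc p"]
        N[rule_format, of q p] pq by (simp add: dist_norm)
    finally show ?thesis .
  qed
  have "\<exists>C\<ge>0. \<forall>m\<in>{1..N}. \<forall>n. cmod (b m (Suc n)) \<le> C"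
  proof (rule fin_bound, simp, intro ballI)
    fix m assume "m \<in> {1..N}"
    then have "summable (\<lambda>n. b m (Suc n))" using rows by auto
    then have "(\<lambda>n. b m (Suc n)) \<longlonglongrightarrow> 0" by (rule summable_LIMSEQ_zero)
    then have "convergent (\<lambda>n. b m (Suc n))" by (auto simp: convergent_def)
    then have "Bseq (\<lambda>n. b m (Suc n))" using convergent_imp_Bseq by blast
    then show "\<exists>C. \<forall>n. cmod (b m (Suc n)) \<le> C" unfolding Bseq_def by auto
  qed
  then obtain C1 where C1: "C1 \<ge> 0" "\<forall>m\<in>{1..N}. \<forall>n. cmod (b m (Suc n)) \<le> C1" by auto
  have "\<exists>C\<ge>0. \<forall>n\<in>{1..N}. \<forall>m. cmod ((\<lambda>n m. b (Suc m) n) n m) \<le> C"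
  proof (rule fin_bound, simp, intro ballI)
    fix n assume "n \<in> {1..N}"
    then have "summable (\<lambda>m. b (Suc m) n)" using cols by auto
    then have "(\<lambda>m. b (Suc m) n) \<longlonglongrightarrow> 0" by (rule summable_LIMSEQ_zero)
    then have "convergent (\<lambda>m. b (Suc m) n)" by (auto simp: convergent_def)
    then have "Bseq (\<lambda>m. b (Suc m) n)" using convergent_imp_Bseq by blast
    then show "\<exists>C. \<forall>m. cmod ((\<lambda>n m. b (Suc m) n) n m) \<le> C" unfolding Bseq_def by auto
  qed
  then obtain C2 where C2: "C2 \<ge> 0" "\<forall>n\<in>{1..N}. \<forall>m. cmod (b (Suc m) n) \<le> C2" by auto
  show ?thesis
  proof (rule exI[of _ "2 + C1 + C2"], intro conjI allI impI)
    fix m n :: nat assume mn: "m \<ge> 1" "n \<ge> 1"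
    show "cmod (a m n * of_nat m powr (-s) * of_nat n powr (-u)) \<le> 2 + C1 + C2"
    proof (cases "m \<le> N")
      case True
      obtain q where "n = Suc q" using mn by (metis Suc_pred' less_eq_Suc_le One_nat_def)
      then have "cmod (b m n) \<le> C1" using C1 True mn by auto
      then show ?thesis using C2 unfolding b_def by linarith
    next
      case F: False
      show ?thesis
      proof (cases "n \<le> N")
        case True
        obtain p where "m = Suc p" using mn by (metis Suc_pred' less_eq_Suc_le One_nat_def)
        then have "cmod (b m n) \<le> C2" using C2 True mn by auto
        then show ?thesis using C1 unfolding b_def by linarith
      next
        case False
        then have "cmod (b m n) \<le> 2" using F big by auto
        then show ?thesis using C1 C2 unfolding b_def by linarith
      qed
    qed
  qed (use C1 C2 in auto)
qed



lemma inv_sq_sum: "M \<ge> 1 \<Longrightarrow> (\<Sum>m=2..M. 1 / (real m)^2) \<le> 1 - 1 / real M"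
proof (induction M)
  case 0 then show ?case by simp
next
  case (Suc M)
  show ?case
  proof (cases "M = 0")
    case True then show ?thesis by simp
  next
    case False
    then have IH: "(\<Sum>m=2..M. 1 / (real m)^2) \<le> 1 - 1 / real M" using Suc by simp
    have "(\<Sum>m=2..Suc M. 1 / (real m)^2) = (\<Sum>m=2..M. 1 / (real m)^2) + 1 / (real (Suc M))^2"
      using False by (simp add: sum.cl_ivl_Suc)
    also have "\<dots> \<le> 1 - 1 / real M + 1 / (real (Suc M))^2" using IH by simp
    also have "\<dots> \<le> 1 - 1 / real (Suc M)"
    proof -
      have e: "1 / real M - 1 / real (Suc M) = 1 / (real M * real (Suc M))"
        using False by (simp add: field_simps)
      have "1 / (real (Suc M))^2 \<le> 1 / (real M * real (Suc M))"
        using False unfolding power2_eq_square by (intro divide_left_mono mult_right_mono) auto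
      then have "1 / (real (Suc M))^2 \<le> 1 / real M - 1 / real (Suc M)" using e by simp
      then show ?thesis by simp
    qed
    finally show ?thesis .
  qed
qed

lemma W_bound:
  fixes w :: real assumes w: "w \<ge> 2"
  shows "(\<Sum>m=1..M. real m powr (-w)) \<le> 1 + 2 powr (2 - w)"
proof (cases "M = 0")
  case True then show ?thesis by simp
next
  case False
  have t: "real m powr (-w) \<le> 2 powr (2 - w) * (1 / (real m)^2)" if "m \<ge> 2" for m
  proof -
    have "real m powr (-w) = real m powr (-2) * real m powr (-(w - 2))"
      by (simp add: powr_add[symmetric])
    also have "real m powr (-2) = 1 / (real m)^2" using that by (simp add: powr_minus powr_power inverse_eq_divide)
    also have "1 / (real m)^2 * real m powr (-(w-2)) \<le> 1 / (real m)^2 * 2 powr (-(w-2))"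
    proof (rule mult_left_mono)
      show "real m powr (-(w-2)) \<le> 2 powr (-(w-2))"
        using that w by (intro powr_mono2') auto
    qed simp
    also have "1 / (real m)^2 * 2 powr (-(w-2)) = 2 powr (2 - w) * (1 / (real m)^2)" by simp
    finally show ?thesis .
  qed
  have "(\<Sum>m=1..M. real m powr (-w)) = 1 + (\<Sum>m=2..M. real m powr (-w))"
    using False by (simp add: sum.atLeast_Suc_atMost numeral_2_eq_2)
  also have "(\<Sum>m=2..M. real m powr (-w)) \<le> (\<Sum>m=2..M. 2 powr (2 - w) * (1 / (real m)^2))"
    by (rule sum_mono) (use t in auto)
  also have "\<dots> = 2 powr (2 - w) * (\<Sum>m=2..M. 1 / (real m)^2)" by (simp add: sum_distrib_left)
  also have "\<dots> \<le> 2 powr (2 - w) * 1"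
  proof -
    have "1 / real M \<ge> 0" by simp
    then have "(\<Sum>m=2..M. 1 / (real m)^2) \<le> 1" using inv_sq_sum[of M] False
      by linarith
    then show ?thesis by (intro mult_left_mono) auto
  qed
  finally show ?thesis by simp
qed

lemma cpow_real: "(of_nat m :: complex) powr (- complex_of_real x) = of_real (real m powr (-x))"
  using powr_of_real[of "real m" "-x"] by simp

lemma main_est:
  fixes s0 x y :: real
  assumes C: "C \<ge> 0" "\<forall>m\<ge>1. \<forall>n\<ge>1. cmod (a m n * of_nat m powr (- complex_of_real s0) * of_nat n powr (- complex_of_real s0)) \<le> C"
    and x: "x \<ge> s0 + 2" and y: "y \<ge> s0 + 2" and MN: "M \<ge> 1" "N \<ge> 1"
  shows "cmod (dpsum a (of_real x) (of_real y) (M, N) - a 1 1)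
          \<le> C * ((1 + 2 powr (2 - (x - s0))) * (1 + 2 powr (2 - (y - s0))) - 1)"
proof -
  define b where "b m n = a m n * of_nat m powr (- complex_of_real s0) * of_nat n powr (- complex_of_real s0)" for m n
  define w where "w m = real m powr (-(x - s0))" for m :: nat
  define v where "v n = real n powr (-(y - s0))" for n :: nat
  define t where "t p = a (fst p) (snd p) * of_nat (fst p) powr (- complex_of_real x) * of_nat (snd p) powr (- complex_of_real y)" for p
  define R where "R = {1..M} \<times> {1..N}"
  have fR: "finite R" and oneR: "(1,1) \<in> R" using MN unfolding R_def by auto
  have tt: "t (m, n) = b m n * of_real (w m * v n)" for m n
  proof -
    have "real m powr (-x) = real m powr (-s0) * w m"
      unfolding w_def by (simp add: powr_add[symmetric])
    moreover have "real n powr (-y) = real n powr (-s0) * v n"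
      unfolding v_def by (simp add: powr_add[symmetric])
    ultimately show ?thesis unfolding t_def b_def by (simp add: cpow_real)
  qed
  have ds: "dpsum a (of_real x) (of_real y) (M, N) = sum t R"
    unfolding dpsum_def R_def t_def by (simp add: sum.cartesian_product case_prod_beta)
  have t11: "t (1,1) = a 1 1" unfolding t_def by simp
  have "dpsum a (of_real x) (of_real y) (M, N) - a 1 1 = sum t (R - {(1,1)})"
    using ds t11 sum.remove[OF fR oneR, of t] by simp
  then have "cmod (dpsum a (of_real x) (of_real y) (M, N) - a 1 1) \<le> (\<Sum>p\<in>R - {(1,1)}. cmod (t p))"
    by (simp add: norm_sum)
  also have "\<dots> \<le> (\<Sum>p\<in>R - {(1,1)}. C * (w (fst p) * v (snd p)))"
  proof (rule sum_mono)
    fix p assume "p \<in> R - {(1,1)}"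
    then have p: "fst p \<ge> 1" "snd p \<ge> 1" unfolding R_def by auto
    have wv: "w (fst p) * v (snd p) \<ge> 0" "w (fst p) \<ge> 0" "v (snd p) \<ge> 0" unfolding w_def v_def by simp_all
    have "cmod (t p) = cmod (b (fst p) (snd p)) * (w (fst p) * v (snd p))"
      using tt[of "fst p" "snd p"] wv by (simp add: norm_mult)
    also have "\<dots> \<le> C * (w (fst p) * v (snd p))"
      using C p wv unfolding b_def by (intro mult_right_mono) auto
    finally show "cmod (t p) \<le> C * (w (fst p) * v (snd p))" .
  qed
  also have "\<dots> = C * ((\<Sum>p\<in>R. w (fst p) * v (snd p)) - w 1 * v 1)"
    using sum.remove[OF fR oneR, of "\<lambda>p. w (fst p) * v (snd p)"] by (simp add: sum_distrib_left algebra_simps)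
  also have "(\<Sum>p\<in>R. w (fst p) * v (snd p)) = (\<Sum>m=1..M. w m) * (\<Sum>n=1..N. v n)"
    unfolding R_def by (simp add: sum.cartesian_product case_prod_beta sum_product)
  also have "w 1 * v 1 = 1" unfolding w_def v_def by simp
  also have "(\<Sum>m=1..M. w m) * (\<Sum>n=1..N. v n) \<le> (1 + 2 powr (2 - (x - s0))) * (1 + 2 powr (2 - (y - s0)))"
    unfolding w_def v_def using W_bound[of "x - s0" M] W_bound[of "y - s0" N] x y
    by (intro mult_mono) (auto intro: sum_nonneg)
  finally show ?thesis using C by (simp add: mult_left_mono)
qed



lemma kern_est:
  fixes s0 x y :: real
  assumes regc: "regularly_convergent_on a (halfplane \<rho>)" and s0: "s0 > \<rho>"
    and C: "C \<ge> 0" "\<forall>m\<ge>1. \<forall>n\<ge>1. cmod (a m n * of_nat m powr (- complex_of_real s0) * of_nat n powr (- complex_of_real s0)) \<le> C"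
    and x: "x \<ge> s0 + 2" and y: "y \<ge> s0 + 2"
  shows "cmod (dir_kernel a (of_real x) (of_real y) - a 1 1)
          \<le> C * ((1 + 2 powr (2 - (x - s0))) * (1 + 2 powr (2 - (y - s0))) - 1)"
proof -
  have xy: "complex_of_real x \<in> halfplane \<rho>" "complex_of_real y \<in> halfplane \<rho>"
    using x y s0 unfolding halfplane_def by auto
  obtain L where L: "(dpsum a (of_real x) (of_real y) \<longlongrightarrow> L) (sequentially \<times>\<^sub>F sequentially)"
    using regc xy unfolding regularly_convergent_on_def by blast
  have nb: "sequentially \<times>\<^sub>F sequentially \<noteq> (bot :: (nat \<times> nat) filter)"
    by (simp add: prod_filter_eq_bot)
  have "dir_kernel a (of_real x) (of_real y) = L"
    unfolding dir_kernel_def using tendsto_Lim[OF nb L] by simp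
  moreover have "cmod (L - a 1 1) \<le> C * ((1 + 2 powr (2 - (x - s0))) * (1 + 2 powr (2 - (y - s0))) - 1)"
  proof (rule tendsto_upperbound[OF _ _ nb])
    show "((\<lambda>p. cmod (dpsum a (of_real x) (of_real y) p - a 1 1)) \<longlongrightarrow> cmod (L - a 1 1)) (sequentially \<times>\<^sub>F sequentially)"
      by (intro tendsto_intros L)
    show "\<forall>\<^sub>F p in sequentially \<times>\<^sub>F sequentially. cmod (dpsum a (of_real x) (of_real y) p - a 1 1)
          \<le> C * ((1 + 2 powr (2 - (x - s0))) * (1 + 2 powr (2 - (y - s0))) - 1)"
      unfolding eventually_prod_sequentially
      by (rule exI[of _ 1]) (use main_est[OF C x y] in auto)
  qed
  ultimately show ?thesis by simp
qed

lemma delta0: "((\<lambda>z. 2 powr (2 - (z - s0))) \<longlongrightarrow> (0::real)) at_top" by real_asymp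

theorem corollary2p7:
  fixes \<rho> :: real and a :: "nat \<Rightarrow> nat \<Rightarrow> complex"
    and H :: "(complex \<Rightarrow> complex) set"
    and ip :: "(complex \<Rightarrow> complex) \<Rightarrow> (complex \<Rightarrow> complex) \<Rightarrow> complex"
  assumes "dirichlet_kernel_on \<rho> a"
    and "psd_kernel (halfplane \<rho>) (dir_kernel a)"
    and "rkhs (halfplane \<rho>) (dir_kernel a) H ip"
  shows "closed_subspace H ip (H_inf H) \<and>
         (lim_both (dir_kernel a) \<noteq> 0 \<longrightarrow>
         is_reproducing_kernel (halfplane \<rho>) (H_inf H) ip
           (\<lambda>s u. dir_kernel a s u
                  - lim_right (dir_kernel a) s * lim_left (dir_kernel a) u / lim_both (dir_kernel a)))"
proof -
  define D where "D = halfplane \<rho>"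
  define K where "K = dir_kernel a"
  interpret rk D K H ip using assms(3) unfolding D_def K_def by unfold_locales
  have regc: "regularly_convergent_on a (halfplane \<rho>)" using assms(1) unfolding dirichlet_kernel_on_def .
  have inD: "complex_of_real x \<in> D \<longleftrightarrow> x > \<rho>" for x unfolding D_def halfplane_def by simp
  define s0 where "s0 = \<rho> + 1"
  have s0r: "s0 > \<rho>" unfolding s0_def by simp
  obtain C where C: "C \<ge> 0" "\<forall>m\<ge>1. \<forall>n\<ge>1. cmod (a m n * of_nat m powr (- complex_of_real s0) * of_nat n powr (- complex_of_real s0)) \<le> C"
    using term_bound[OF regc, of "of_real s0" "of_real s0"] s0r unfolding halfplane_def by auto
  define E where "E z = C * ((1 + 2 powr (2 - (z - s0))) * (1 + 2 powr (2 - (z - s0))) - 1)" for z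
  have Eest: "cmod (K (of_real x) (of_real y) - a 1 1) \<le> E z" if z: "z \<ge> s0+2" "x \<ge> z" "y \<ge> z" for x y z
  proof -
    have "cmod (K (of_real x) (of_real y) - a 1 1)
          \<le> C * ((1 + 2 powr (2 - (x - s0))) * (1 + 2 powr (2 - (y - s0))) - 1)"
      unfolding K_def using kern_est[OF regc s0r C] z by auto
    also have "\<dots> \<le> E z" unfolding E_def
      using z by (intro mult_left_mono C diff_right_mono mult_mono add_left_mono) auto
    finally show ?thesis .
  qed
  have E0: "(E \<longlongrightarrow> 0) at_top"
  proof -
    have "((\<lambda>z. C * ((1 + 2 powr (2 - (z - s0))) * (1 + 2 powr (2 - (z - s0))) - 1)) \<longlongrightarrow> C * ((1 + 0) * (1 + 0) - 1)) at_top"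
      by (intro tendsto_intros delta0)
    then show ?thesis unfolding E_def by simp
  qed
  have kd: "hnorm ip (\<lambda>w. kfun D K (of_real x) w - kfun D K (of_real y) w) \<le> 2 * sqrt (E z)"
    if z: "z \<ge> s0+2" "x \<ge> z" "y \<ge> z" for x y z
  proof -
    have xD: "complex_of_real x \<in> D" and yD: "complex_of_real y \<in> D" using z s0r inD by auto
    let ?x = "complex_of_real x" and ?y = "complex_of_real y"
    have "cmod (K ?x ?x - K ?y ?x - K ?x ?y + K ?y ?y)
      \<le> cmod (K ?x ?x - a 1 1) + cmod (K ?y ?x - a 1 1) + cmod (K ?x ?y - a 1 1) + cmod (K ?y ?y - a 1 1)"
      by (rule norm4L)
    also have "\<dots> \<le> 4 * E z" using Eest[OF z(1) z(2) z(2)] Eest[OF z(1) z(3) z(2)] Eest[OF z(1) z(2) z(3)]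
      Eest[OF z(1) z(3) z(3)] by linarith
    finally have "Re (K ?x ?x - K ?y ?x - K ?x ?y + K ?y ?y) \<le> 4 * E z"
      using complex_Re_le_cmod order_trans by blast
    moreover have Ez: "E z \<ge> 0" using Eest[OF z(1) z(2) z(2)] norm_ge_zero[of "K ?x ?x - a 1 1"] by linarith
    moreover have "(2 * sqrt (E z))^2 = 4 * E z" using Ez by (simp add: power_mult_distrib)
    ultimately have "(hnorm ip (\<lambda>w. kfun D K ?x w - kfun D K ?y w))^2 \<le> (2 * sqrt (E z))^2"
      using kdiff_sq[OF xD yD] by simp
    then show ?thesis by (rule power2_le_imp_le) (use Ez in simp)
  qed
  have Esmall: "\<exists>z\<ge>s0+2. 2 * sqrt (E z) < e" if e: "e > 0" for e
  proof -
    have "eventually (\<lambda>z. E z < (e/2)^2 \<and> z \<ge> s0 + 2) at_top"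
      using E0 e by (intro eventually_conj order_tendstoD(2) eventually_ge_at_top) auto
    then obtain N where N: "\<forall>z\<ge>N. E z < (e/2)^2 \<and> z \<ge> s0 + 2" unfolding eventually_at_top_linorder by blast
    then have z: "E N < (e/2)^2" "N \<ge> s0+2" by auto
    have "sqrt (E N) < sqrt ((e/2)^2)" using z(1) by (rule real_sqrt_less_mono)
    also have "\<dots> = e/2" using e by simp
    finally have "sqrt (E N) < e/2" .
    then show ?thesis using z by auto
  qed
  define X where "X n = kfun D K (of_real (s0 + 2 + real n))" for n
  have XH: "X n \<in> H" for n
  proof -
    have "complex_of_real (s0 + 2 + real n) \<in> D" unfolding inD using s0r by simp
    then show ?thesis unfolding X_def by (rule kin)
  qed
  have "\<exists>g\<in>H. (\<lambda>n. hnorm ip (\<lambda>x. X n x - g x)) \<longlonglongrightarrow> 0"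
  proof (rule complete)
    show "\<forall>n. X n \<in> H" using XH by auto
    show "\<forall>e>0. \<exists>N. \<forall>m\<ge>N. \<forall>n\<ge>N. hnorm ip (\<lambda>x. X m x - X n x) < e"
    proof (intro allI impI)
      fix e :: real assume "e > 0"
      then obtain z where z: "z \<ge> s0+2" "2 * sqrt (E z) < e" using Esmall by blast
      show "\<exists>N. \<forall>m\<ge>N. \<forall>n\<ge>N. hnorm ip (\<lambda>x. X m x - X n x) < e"
      proof (rule exI[of _ "nat \<lceil>z - s0 - 2\<rceil>"], intro allI impI)
        fix m n assume mn: "m \<ge> nat \<lceil>z - s0 - 2\<rceil>" "n \<ge> nat \<lceil>z - s0 - 2\<rceil>"
        have "s0 + 2 + real m \<ge> z" "s0 + 2 + real n \<ge> z" using mn by linarith+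
        then have "hnorm ip (\<lambda>x. X m x - X n x) \<le> 2 * sqrt (E z)" unfolding X_def by (intro kd[OF z(1)])
        then show "hnorm ip (\<lambda>x. X m x - X n x) < e" using z(2) by linarith
      qed
    qed
  qed
  then obtain g where g: "g \<in> H" "(\<lambda>n. hnorm ip (\<lambda>x. X n x - g x)) \<longlonglongrightarrow> 0" by blast
  have kg: "((\<lambda>t. hnorm ip (\<lambda>w. kfun D K (of_real t) w - g w)) \<longlongrightarrow> 0) at_top"
  proof (rule tendstoI)
    fix e :: real assume e: "e > 0"
    then obtain z where z: "z \<ge> s0+2" "2 * sqrt (E z) < e/2" using Esmall[of "e/2"] by auto
    have "eventually (\<lambda>n. hnorm ip (\<lambda>x. X n x - g x) < e/2) sequentially"
      using g(2) e by (intro order_tendstoD(2)) auto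
    moreover have "eventually (\<lambda>n. n \<ge> nat \<lceil>z - s0 - 2\<rceil>) sequentially" by simp
    ultimately have "eventually (\<lambda>n. hnorm ip (\<lambda>x. X n x - g x) < e/2 \<and> n \<ge> nat \<lceil>z - s0 - 2\<rceil>) sequentially"
      by (rule eventually_conj)
    then obtain n0 where "\<forall>n\<ge>n0. hnorm ip (\<lambda>x. X n x - g x) < e/2 \<and> n \<ge> nat \<lceil>z - s0 - 2\<rceil>"
      unfolding eventually_sequentially by blast
    then obtain n where n: "hnorm ip (\<lambda>x. X n x - g x) < e/2" "n \<ge> nat \<lceil>z - s0 - 2\<rceil>" by blast
    have nz: "s0 + 2 + real n \<ge> z" using n by linarith
    show "eventually (\<lambda>t. dist (hnorm ip (\<lambda>w. kfun D K (of_real t) w - g w)) 0 < e) at_top"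
      using eventually_ge_at_top[of z]
    proof eventually_elim
      case (elim t)
      have tD: "complex_of_real t \<in> D" using elim z s0r inD by auto
      have kt: "kfun D K (of_real t) \<in> H" using kin tD by auto
      have "hnorm ip (\<lambda>w. kfun D K (of_real t) w - g w)
           \<le> hnorm ip (\<lambda>w. kfun D K (of_real t) w - X n w) + hnorm ip (\<lambda>w. X n w - g w)"
        using tri2[OF kt g(1) XH] by simp
      also have "\<dots> < e" using kd[OF z(1) elim nz] z n unfolding X_def by linarith
      finally show ?case using hn_nonneg[OF diff_in[OF kt g(1)]] by simp
    qed
  qed
  have flim: "((\<lambda>t. f (of_real t)) \<longlongrightarrow> ip f g) at_top" if f: "f \<in> H" for f
  proof -
    have "((\<lambda>t. ip f (kfun D K (of_real t)) - ip f g) \<longlongrightarrow> 0) at_top"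
    proof (rule Lim_null_comparison)
      show "eventually (\<lambda>t. norm (ip f (kfun D K (of_real t)) - ip f g)
             \<le> hnorm ip f * hnorm ip (\<lambda>w. kfun D K (of_real t) w - g w)) at_top"
        using eventually_gt_at_top[of \<rho>]
      proof eventually_elim
        case (elim t)
        then show ?case using ip_cont2[OF f kin g(1)] inD by auto
      qed
      show "((\<lambda>t. hnorm ip f * hnorm ip (\<lambda>w. kfun D K (of_real t) w - g w)) \<longlongrightarrow> 0) at_top"
        using tendsto_mult_right_zero[OF kg] by simp
    qed
    then have "((\<lambda>t. ip f (kfun D K (of_real t))) \<longlongrightarrow> ip f g) at_top" by (rule LIM_zero_cancel)
    then show ?thesis
    proof (rule Lim_transform_eventually)
      show "eventually (\<lambda>t. ip f (kfun D K (of_real t)) = f (of_real t)) at_top"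
        using eventually_gt_at_top[of \<rho>]
      proof eventually_elim
        case (elim t)
        then have "complex_of_real t \<in> D" using inD by simp
        then show ?case using repr f by blast
      qed
    qed
  qed
  have Hinf: "H_inf H = {f \<in> H. ip f g = 0}"
  proof -
    have "((\<lambda>x. f (of_real x)) \<longlongrightarrow> 0) at_top \<longleftrightarrow> ip f g = 0" if f: "f \<in> H" for f
    proof
      assume "((\<lambda>x. f (of_real x)) \<longlongrightarrow> 0) at_top"
      from tendsto_unique[OF trivial_limit_at_top_linorder flim[OF f] this] show "ip f g = 0" .
    next
      assume "ip f g = 0"
      then show "((\<lambda>x. f (of_real x)) \<longlongrightarrow> 0) at_top" using flim[OF f] by simp
    qed
    then show ?thesis unfolding H_inf_def by auto
  qed
  have part1: "closed_subspace H ip (H_inf H)"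
    unfolding closed_subspace_def Hinf
  proof (intro conjI ballI allI impI)
    show "{f \<in> H. ip f g = 0} \<subseteq> H" by auto
    show "(\<lambda>x. 0) \<in> {f \<in> H. ip f g = 0}" using zero_in ip_zero1 g by auto
    show "(\<lambda>x. f x + h x) \<in> {f \<in> H. ip f g = 0}" if "f \<in> {f \<in> H. ip f g = 0}" "h \<in> {f \<in> H. ip f g = 0}" for f h
      using that add_in ip_add g by auto
    show "(\<lambda>x. c * f x) \<in> {f \<in> H. ip f g = 0}" if "f \<in> {f \<in> H. ip f g = 0}" for f c
      using that scale_in ip_scale g by auto
    fix Y f assume Y: "\<forall>n. Y n \<in> {f \<in> H. ip f g = 0}" and f: "f \<in> H"
      and lim: "(\<lambda>n. hnorm ip (\<lambda>x. Y n x - f x)) \<longlonglongrightarrow> 0"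
    have "cmod (ip f g) \<le> 0"
    proof (rule tendsto_lowerbound[OF _ _ trivial_limit_sequentially])
      show "(\<lambda>n. hnorm ip (\<lambda>x. Y n x - f x) * hnorm ip g) \<longlonglongrightarrow> 0"
        using tendsto_mult_left_zero[OF lim] by simp
      show "\<forall>\<^sub>F n in sequentially. cmod (ip f g) \<le> hnorm ip (\<lambda>x. Y n x - f x) * hnorm ip g"
      proof (rule always_eventually, rule allI)
        fix n
        have Yn: "Y n \<in> H" "ip (Y n) g = 0" using Y by auto
        show "cmod (ip f g) \<le> hnorm ip (\<lambda>x. Y n x - f x) * hnorm ip g"
          using ip_cont1[OF g(1) f Yn(1)] Yn hn_sym[OF f Yn(1)] by simp
      qed
    qed
    then show "f \<in> {f \<in> H. ip f g = 0}" using f by simp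
  qed
  have lr: "lim_right K s = g s" if s: "s \<in> D" for s
  proof -
    have ks: "kfun D K s \<in> H" using kin s by auto
    have "((\<lambda>r. cnj (kfun D K s (of_real r))) \<longlongrightarrow> cnj (ip (kfun D K s) g)) at_top"
      by (intro tendsto_cnj flim ks)
    then have "((\<lambda>r. K s (of_real r)) \<longlongrightarrow> cnj (ip (kfun D K s) g)) at_top"
    proof (rule Lim_transform_eventually)
      show "eventually (\<lambda>r. cnj (kfun D K s (of_real r)) = K s (of_real r)) at_top"
        using eventually_gt_at_top[of \<rho>]
      proof eventually_elim
        case (elim r)
        then have rD: "complex_of_real r \<in> D" using inD by auto
        have "K s (of_real r) = ip (kfun D K (of_real r)) (kfun D K s)" using kk[OF s rD] by simp
        also have "\<dots> = cnj (ip (kfun D K s) (kfun D K (of_real r)))" using ip_cnj[OF ks kin[OF rD]] by simp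
        also have "\<dots> = cnj (kfun D K s (of_real r))" using repr[OF rD ks] by simp
        finally show ?case by simp
      qed
    qed
    moreover have "cnj (ip (kfun D K s) g) = g s" using ip_cnj[OF ks g(1)] repr[OF s g(1)] by simp
    ultimately show ?thesis unfolding lim_right_def by (simp add: tendsto_Lim)
  qed
  have ll: "lim_left K u = ip (kfun D K u) g" if u: "u \<in> D" for u
  proof -
    have ku: "kfun D K u \<in> H" using kin u by auto
    have "((\<lambda>t. K (of_real t) u) \<longlongrightarrow> ip (kfun D K u) g) at_top"
      using flim[OF ku]
    proof (rule Lim_transform_eventually)
      show "eventually (\<lambda>t. kfun D K u (of_real t) = K (of_real t) u) at_top"
        using eventually_gt_at_top[of \<rho>] by eventually_elim (use inD in \<open>auto simp: kfun_def\<close>)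
    qed
    then show ?thesis unfolding lim_left_def by (simp add: tendsto_Lim)
  qed
  have lb: "lim_both K = ip g g"
  proof -
    have "((\<lambda>t. lim_right K (of_real t)) \<longlongrightarrow> ip g g) at_top"
      using flim[OF g(1)]
    proof (rule Lim_transform_eventually)
      show "eventually (\<lambda>t. g (of_real t) = lim_right K (of_real t)) at_top"
        using eventually_gt_at_top[of \<rho>] by eventually_elim (use inD lr in auto)
    qed
    then show ?thesis unfolding lim_both_def by (simp add: tendsto_Lim)
  qed
  have part2: "is_reproducing_kernel D (H_inf H) ip
           (\<lambda>s u. K s u - lim_right K s * lim_left K u / lim_both K)" if c: "lim_both K \<noteq> 0"
    unfolding is_reproducing_kernel_def
  proof (rule ballI, rule conjI)
    fix u assume u: "u \<in> D"
    have ku: "kfun D K u \<in> H" using kin u by auto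
    define \<beta> where "\<beta> = - ip (kfun D K u) g / ip g g"
    have eq: "kfun D (\<lambda>s u. K s u - lim_right K s * lim_left K u / lim_both K) u
            = (\<lambda>x. kfun D K u x + \<beta> * g x)"
    proof
      fix x show "kfun D (\<lambda>s u. K s u - lim_right K s * lim_left K u / lim_both K) u x = kfun D K u x + \<beta> * g x"
      proof (cases "x \<in> D")
        case True
        have e1: "kfun D (\<lambda>s u. K s u - lim_right K s * lim_left K u / lim_both K) u x
            = K x u - lim_right K x * lim_left K u / lim_both K" using True by (simp add: kfun_def)
        have e2: "kfun D K u x = K x u" using True by (simp add: kfun_def)
        show ?thesis unfolding e1 e2 \<beta>_def using lr[OF True] ll[OF u] lb by simp
      next
        case False
        then show ?thesis unfolding kfun_def using vanish[OF g(1) False] by simp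
      qed
    qed
    have inH: "(\<lambda>x. kfun D K u x + \<beta> * g x) \<in> H" using lin_in[OF ku g(1)] by simp
    have "ip (\<lambda>x. kfun D K u x + \<beta> * g x) g = 0"
    proof -
      have "ip (\<lambda>x. kfun D K u x + \<beta> * g x) g = ip (kfun D K u) g + \<beta> * ip g g"
        by (rule ip_lin[OF ku g(1) g(1)])
      also have "\<dots> = 0" using c lb unfolding \<beta>_def by simp
      finally show ?thesis .
    qed
    then show "kfun D (\<lambda>s u. K s u - lim_right K s * lim_left K u / lim_both K) u \<in> H_inf H"
      unfolding eq Hinf using inH by simp
    show "\<forall>f\<in>H_inf H. ip f (kfun D (\<lambda>s u. K s u - lim_right K s * lim_left K u / lim_both K) u) = f u"
    proof
      fix f assume "f \<in> H_inf H"
      then have f: "f \<in> H" "ip f g = 0" unfolding Hinf by auto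
      show "ip f (kfun D (\<lambda>s u. K s u - lim_right K s * lim_left K u / lim_both K) u) = f u"
        unfolding eq using ip_lin2[OF ku g(1) f(1)] f repr[OF u f(1)] by simp
    qed
  qed
  have "closed_subspace H ip (H_inf H) \<and> (lim_both K \<noteq> 0 \<longrightarrow> is_reproducing_kernel D (H_inf H) ip
           (\<lambda>s u. K s u - lim_right K s * lim_left K u / lim_both K))"
    using part1 part2 by blast
  then show ?thesis unfolding D_def K_def .
qed


end
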